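(* Fix $a\in[0,\infty)$. For a function $G:[0,1]^2\to[0,1]$ the following are equivalent: (1) There exist a continuous and strictly increasing function $t:[0,1]\to[0,\infty]$ and a continuous and increasing function $s:[0,\infty]\to[0,1]$ such that $G(x,y)=s(t(x)+t(y))$ for all $x,y$, $G$ is a grouping function, and at least one of the following holds: (a) $t(x)=\frac{a}{2}$ if and only if $x=0$; (b) $s(x)=0$ if and only if $x\in[0,a]$. (2) $G$ is a grouping function and there exist a pseudo automorphism $\mathcal{F}$ and a strict t-conorm $S$ with $G(x,y)=\mathcal{F}(S(x,y))$ for all $(x,y)\in[0,1]^2$. (3) There exist a strictly increasing bijection $\varphi:[0,1]\to[0,1]$ and a pseudo automorphism $\mathcal{H}$ such that $G(x,y)=\mathcal{H}(\varphi(x)+\varphi(y)-\varphi(x)\varphi(y))$ for all $(x,y)\in[0,1]^2$.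
   Context: "Increasing" means non-decreasing. Arithmetic in $[0,\infty]$ uses $c+\infty=\infty$; continuity on $[0,\infty]$ refers to the usual topology of the extended half-line. A grouping function is a map $G:[0,1]^2\to[0,1]$ that is (G1) commutative, (G2) $G(x,y)=0$ iff $x=y=0$, (G3) $G(x,y)=1$ iff $x=1$ or $y=1$, (G4) increasing in each variable, (G5) continuous. A pseudo automorphism is a continuous increasing map $\mathcal{F}:[0,1]\to[0,1]$ with $\mathcal{F}(x)=1$ iff $x=1$ and $\mathcal{F}(x)=0$ iff $x=0$. A t-conorm is a commutative, associative map $S:[0,1]^2\to[0,1]$, increasing in each variable, with $S(x,0)=x$; it is strict if it is continuous and strictly increasing on $[0,1)^2$ (i.e. $S(x,y)<S(x',y)$ whenever $y<1$ and $x<x'$). *)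

theory Defs
  imports "HOL-Analysis.Analysis" "HOL-Library.Extended_Nonnegative_Real"
begin

definition grouping_function :: "(real \<Rightarrow> real \<Rightarrow> real) \<Rightarrow> bool" where
  "grouping_function G \<longleftrightarrow>
     (\<forall>x\<in>{0..1}. \<forall>y\<in>{0..1}. G x y \<in> {0..1}) \<and>
     (\<forall>x\<in>{0..1}. \<forall>y\<in>{0..1}. G x y = G y x) \<and>
     (\<forall>x\<in>{0..1}. \<forall>y\<in>{0..1}. G x y = 0 \<longleftrightarrow> x = 0 \<and> y = 0) \<and>
     (\<forall>x\<in>{0..1}. \<forall>y\<in>{0..1}. G x y = 1 \<longleftrightarrow> x = 1 \<or> y = 1) \<and>
     (\<forall>x\<in>{0..1}. \<forall>x'\<in>{0..1}. \<forall>y\<in>{0..1}. x \<le> x' \<longrightarrow> G x y \<le> G x' y) \<and>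
     (\<forall>x\<in>{0..1}. \<forall>y\<in>{0..1}. \<forall>y'\<in>{0..1}. y \<le> y' \<longrightarrow> G x y \<le> G x y') \<and>
     continuous_on ({0..1} \<times> {0..1}) (\<lambda>(x, y). G x y)"

definition pseudo_automorphism :: "(real \<Rightarrow> real) \<Rightarrow> bool" where
  "pseudo_automorphism F \<longleftrightarrow>
     (\<forall>x\<in>{0..1}. F x \<in> {0..1}) \<and>
     continuous_on {0..1} F \<and> mono_on {0..1} F \<and>
     (\<forall>x\<in>{0..1}. F x = 1 \<longleftrightarrow> x = 1) \<and>
     (\<forall>x\<in>{0..1}. F x = 0 \<longleftrightarrow> x = 0)"

definition t_conorm :: "(real \<Rightarrow> real \<Rightarrow> real) \<Rightarrow> bool" where
  "t_conorm S \<longleftrightarrow>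
     (\<forall>x\<in>{0..1}. \<forall>y\<in>{0..1}. S x y \<in> {0..1}) \<and>
     (\<forall>x\<in>{0..1}. \<forall>y\<in>{0..1}. S x y = S y x) \<and>
     (\<forall>x\<in>{0..1}. \<forall>y\<in>{0..1}. \<forall>z\<in>{0..1}. S (S x y) z = S x (S y z)) \<and>
     (\<forall>x\<in>{0..1}. \<forall>x'\<in>{0..1}. \<forall>y\<in>{0..1}. x \<le> x' \<longrightarrow> S x y \<le> S x' y) \<and>
     (\<forall>x\<in>{0..1}. \<forall>y\<in>{0..1}. \<forall>y'\<in>{0..1}. y \<le> y' \<longrightarrow> S x y \<le> S x y') \<and>
     (\<forall>x\<in>{0..1}. S x 0 = x)"

definition strict_t_conorm :: "(real \<Rightarrow> real \<Rightarrow> real) \<Rightarrow> bool" where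
  "strict_t_conorm S \<longleftrightarrow> t_conorm S \<and>
     continuous_on ({0..1} \<times> {0..1}) (\<lambda>(x, y). S x y) \<and>
     (\<forall>x\<in>{0..1}. \<forall>x'\<in>{0..1}. \<forall>y\<in>{0..1}. y < 1 \<and> x < x' \<longrightarrow> S x y < S x' y)"

end

theory Submission
  imports Defs
begin

definition SP :: "real \<Rightarrow> real \<Rightarrow> real" where
  "SP v w = v + w - v * w"

definition LL :: "real \<Rightarrow> ennreal" where
  "LL v = (if v < 1 then ennreal (- ln (1 - v)) else \<infinity>)"

definition PP :: "ennreal \<Rightarrow> real" where
  "PP u = (if u = \<infinity> then 1 else 1 - exp (- enn2real u))"

lemma mono_surj_cont:
  fixes g :: "real \<Rightarrow> real"
  assumes m: "mono_on {0..1} g" and im: "g ` {0..1} = {0..1}"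
  shows "continuous_on {0..1} g"
proof -
  define g' where "g' x = (if x < 0 then x else if 1 < x then x else g x)" for x
  have gin: "x \<in> {0..1} \<Longrightarrow> g x \<in> {0..1}" for x using im by auto
  have "g' ` UNIV = UNIV"
  proof (intro set_eqI iffI)
    fix z :: real assume "z \<in> g' ` UNIV" then show "z \<in> UNIV" by simp
  next
    fix z :: real
    assume "z \<in> UNIV"
    show "z \<in> range g'"
    proof (cases "z < 0 \<or> 1 < z")
      case True then show ?thesis by (auto simp: g'_def intro!: image_eqI[of _ _ z])
    next
      case False
      then have "z \<in> g ` {0..1}" using im by auto
      then obtain x where "x \<in> {0..1}" "z = g x" by auto
      then show ?thesis by (auto simp: g'_def intro!: image_eqI[of _ _ x])
    qed
  qed
  moreover have "g' x \<le> g' y" if "x \<le> y" for x y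
    using that gin[of x] gin[of y] m unfolding g'_def mono_on_def
    by (auto simp: not_less)
  ultimately have "continuous_on UNIV g'"
    by (intro continuous_onI_mono) auto
  then have "continuous_on {0..1} g'" by (rule continuous_on_subset) auto
  then show ?thesis by (rule continuous_on_cong[THEN iffD1, rotated 2]) (auto simp: g'_def)
qed

lemma LL_mono: "v \<le> w \<Longrightarrow> LL v \<le> LL w"
  by (auto simp: LL_def intro!: ennreal_leI)

lemma LL_cont: "continuous_on UNIV LL"
proof (rule continuous_onI_mono)
  have "LL ` UNIV = UNIV"
  proof (intro set_eqI iffI)
    fix z :: ennreal assume "z \<in> LL ` UNIV" then show "z \<in> UNIV" by simp
  next
    fix u :: ennreal
    assume "u \<in> UNIV"
    show "u \<in> range LL"
    proof (cases "u = \<infinity>")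
      case True then show ?thesis by (auto simp: LL_def intro!: image_eqI[of _ _ 1])
    next
      case False
      then obtain r where r: "r \<ge> 0" "u = ennreal r" by (cases u) auto
      then show ?thesis by (auto simp: LL_def intro!: image_eqI[of _ _ "1 - exp (- r)"])
    qed
  qed
  then show "open (LL ` UNIV)" by simp
qed (rule LL_mono)

lemma PP_LL: "v \<in> {0..1} \<Longrightarrow> PP (LL v) = v"
  by (auto simp: PP_def LL_def)

lemma LL_PP: "LL (PP u) = u"
proof (cases "u = \<infinity>")
  case True then show ?thesis by (simp add: PP_def LL_def)
next
  case False
  then obtain r where r: "r \<ge> 0" "u = ennreal r" by (cases u) auto
  then show ?thesis by (simp add: PP_def LL_def)
qed

lemma PP_range: "PP u \<in> {0..1}"
  by (auto simp: PP_def)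

lemma PP_lt1: "u \<noteq> \<infinity> \<Longrightarrow> PP u < 1"
  by (auto simp: PP_def)

lemma PP_ennreal: "r \<ge> 0 \<Longrightarrow> PP (ennreal r) = 1 - exp (- r)"
  by (simp add: PP_def)

lemma PP_cont: "continuous_on UNIV PP"
proof -
  have "continuous_on (LL ` {0..1}) PP"
    by (rule continuous_on_inv) (auto intro: continuous_on_subset[OF LL_cont] simp: PP_LL)
  moreover have "LL ` {0..1} = UNIV"
    using PP_range LL_PP by (metis UNIV_eq_I image_eqI)
  ultimately show ?thesis by simp
qed

lemma PP_mono: "u \<le> w \<Longrightarrow> PP u \<le> PP w"
proof (cases "w = \<infinity>")
  case True then show ?thesis using PP_range[of u] by (simp add: PP_def)
next
  case False
  assume "u \<le> w"
  with False have "u \<noteq> \<infinity>" using top_unique by fastforce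
  have "enn2real u \<le> enn2real w" using False \<open>u \<le> w\<close> by (intro enn2real_mono) (auto simp: top.not_eq_extremum)
  with False \<open>u \<noteq> \<infinity>\<close> show ?thesis
    by (simp add: PP_def)
qed

lemma PP_strict: "u < w \<Longrightarrow> PP u < PP w"
  by (metis LL_PP LL_mono not_le)

lemma LL_strict: "v \<in> {0..1} \<Longrightarrow> w \<in> {0..1} \<Longrightarrow> v < w \<Longrightarrow> LL v < LL w"
  by (metis PP_LL PP_mono not_le)

lemma SP_range: "v \<in> {0..1} \<Longrightarrow> w \<in> {0..1} \<Longrightarrow> SP v w \<in> {0..1}"
proof -
  assume a: "v \<in> {0..1}" "w \<in> {0..1}"
  have "SP v w = 1 - (1 - v) * (1 - w)" by (simp add: SP_def algebra_simps)
  moreover have "(1 - v) * (1 - w) \<in> {0..1}" using a by (auto intro: mult_le_one)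
  ultimately show ?thesis by auto
qed

lemma LL_add: assumes "v \<in> {0..1}" "w \<in> {0..1}" shows "LL (SP v w) = LL v + LL w"
proof (cases "v = 1 \<or> w = 1")
  case True then show ?thesis by (auto simp: SP_def LL_def)
next
  case False
  then have v: "v < 1" and w: "w < 1" using assms by auto
  have e: "1 - SP v w = (1 - v) * (1 - w)" by (simp add: SP_def algebra_simps)
  have "0 < (1 - v) * (1 - w)" using v w by simp
  then have s: "SP v w < 1" using e by linarith
  have "- ln (1 - SP v w) = - ln (1 - v) + - ln (1 - w)"
    using v w by (simp add: e ln_mult)
  moreover have "- ln (1 - v) \<ge> 0" "- ln (1 - w) \<ge> 0" using assms v w by auto
  ultimately show ?thesis using v w s by (simp add: LL_def ennreal_plus[symmetric])
qed

lemma PP_add: "PP (u + w) = SP (PP u) (PP w)"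
proof -
  have "u + w = LL (PP u) + LL (PP w)" by (simp add: LL_PP)
  also have "\<dots> = LL (SP (PP u) (PP w))" by (rule LL_add[symmetric]) (rule PP_range)+
  finally show ?thesis by (simp add: PP_LL[OF SP_range[OF PP_range PP_range]])
qed



locale stc =
  fixes S :: "real \<Rightarrow> real \<Rightarrow> real"
  assumes st: "strict_t_conorm S"
begin

lemma Sr: "x \<in> {0..1} \<Longrightarrow> y \<in> {0..1} \<Longrightarrow> S x y \<in> {0..1}"
  using st unfolding strict_t_conorm_def t_conorm_def by blast
lemma Sr0: "x \<in> {0..1} \<Longrightarrow> y \<in> {0..1} \<Longrightarrow> 0 \<le> S x y"
  using Sr by auto
lemma Sr1: "x \<in> {0..1} \<Longrightarrow> y \<in> {0..1} \<Longrightarrow> S x y \<le> 1"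
  using Sr by auto
lemma Sc: "x \<in> {0..1} \<Longrightarrow> y \<in> {0..1} \<Longrightarrow> S x y = S y x"
  using st unfolding strict_t_conorm_def t_conorm_def by blast
lemma Sa: "x \<in> {0..1} \<Longrightarrow> y \<in> {0..1} \<Longrightarrow> z \<in> {0..1} \<Longrightarrow> S (S x y) z = S x (S y z)"
  using st unfolding strict_t_conorm_def t_conorm_def by blast
lemma Sm1: "x \<in> {0..1} \<Longrightarrow> x' \<in> {0..1} \<Longrightarrow> y \<in> {0..1} \<Longrightarrow> x \<le> x' \<Longrightarrow> S x y \<le> S x' y"
  using st unfolding strict_t_conorm_def t_conorm_def by blast
lemma Sm2: "x \<in> {0..1} \<Longrightarrow> y \<in> {0..1} \<Longrightarrow> y' \<in> {0..1} \<Longrightarrow> y \<le> y' \<Longrightarrow> S x y \<le> S x y'"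
  using st unfolding strict_t_conorm_def t_conorm_def by blast
lemma S0: "x \<in> {0..1} \<Longrightarrow> S x 0 = x"
  using st unfolding strict_t_conorm_def t_conorm_def by blast
lemma S0': "x \<in> {0..1} \<Longrightarrow> S 0 x = x"
  using S0 Sc[of 0 x] by simp
lemma Scont: "continuous_on ({0..1} \<times> {0..1}) (\<lambda>(x, y). S x y)"
  using st unfolding strict_t_conorm_def by blast
lemma Sst1: "x \<in> {0..1} \<Longrightarrow> x' \<in> {0..1} \<Longrightarrow> y \<in> {0..1} \<Longrightarrow> y < 1 \<Longrightarrow> x < x' \<Longrightarrow> S x y < S x' y"
  using st unfolding strict_t_conorm_def by blast
lemma Sst2: "x \<in> {0..1} \<Longrightarrow> y \<in> {0..1} \<Longrightarrow> y' \<in> {0..1} \<Longrightarrow> x < 1 \<Longrightarrow> y < y' \<Longrightarrow> S x y < S x y'"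
  using Sst1[of y y' x] Sc by simp
lemma S1: "y \<in> {0..1} \<Longrightarrow> S 1 y = 1"
  using Sm2[of 1 0 y] S0[of 1] Sr[of 1 y] by auto
lemma S1': "y \<in> {0..1} \<Longrightarrow> S y 1 = 1"
  using S1 Sc[of y 1] by simp
lemma Slt1: "x \<in> {0..1} \<Longrightarrow> y \<in> {0..1} \<Longrightarrow> x < 1 \<Longrightarrow> y < 1 \<Longrightarrow> S x y < 1"
  using Sst1[of x 1 y] S1 by simp
lemma Sgt: "x \<in> {0..1} \<Longrightarrow> y \<in> {0..1} \<Longrightarrow> x < 1 \<Longrightarrow> 0 < y \<Longrightarrow> x < S x y"
  using Sst2[of x 0 y] S0 by simp
lemma Sge: "x \<in> {0..1} \<Longrightarrow> y \<in> {0..1} \<Longrightarrow> x \<le> S x y"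
  using Sm2[of x 0 y] S0 by simp

lemma S_tendsto:
  assumes "a \<longlonglongrightarrow> A" "b \<longlonglongrightarrow> B" "\<And>n. a n \<in> {0..1}" "\<And>n. b n \<in> {0..1}"
    "A \<in> {0..1}" "B \<in> {0..1}"
  shows "(\<lambda>n. S (a n) (b n)) \<longlonglongrightarrow> S A B"
proof -
  have "((\<lambda>n. (\<lambda>(x, y). S x y) (a n, b n)) \<longlongrightarrow> (\<lambda>(x, y). S x y) (A, B)) sequentially"
    by (rule continuous_on_tendsto_compose[OF Scont])
       (use assms in \<open>auto intro!: tendsto_Pair\<close>)
  then show ?thesis by simp
qed

definition pw :: "real \<Rightarrow> nat \<Rightarrow> real" where
  "pw x n = (S x ^^ n) 0"

lemma pw_0[simp]: "pw x 0 = 0" by (simp add: pw_def)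
lemma pw_Suc: "pw x (Suc n) = S x (pw x n)" by (simp add: pw_def)
lemma pw_r: "x \<in> {0..1} \<Longrightarrow> pw x n \<in> {0..1}"
  by (induction n) (auto simp: pw_Suc Sr0 Sr1)
lemma pw_r0: "x \<in> {0..1} \<Longrightarrow> 0 \<le> pw x n" using pw_r by auto
lemma pw_r1: "x \<in> {0..1} \<Longrightarrow> pw x n \<le> 1" using pw_r by auto
lemma pw_lt1: "x \<in> {0..1} \<Longrightarrow> x < 1 \<Longrightarrow> pw x n < 1"
  by (induction n) (auto simp: pw_Suc intro!: Slt1 pw_r)
lemma pw_add: "x \<in> {0..1} \<Longrightarrow> pw x (m + n) = S (pw x m) (pw x n)"
proof (induction m)
  case 0 then show ?case by (simp add: S0' pw_r0 pw_r1)
next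
  case (Suc m) then show ?case by (simp add: pw_Suc Sa pw_r0 pw_r1)
qed
lemma pw_mult: "x \<in> {0..1} \<Longrightarrow> pw x (m * n) = pw (pw x m) n"
proof (induction n)
  case 0 then show ?case by simp
next
  case (Suc n)
  have "pw x (m * Suc n) = pw x (m + m * n)" by simp
  also have "\<dots> = S (pw x m) (pw x (m * n))" using Suc by (simp add: pw_add)
  finally show ?case using Suc by (simp add: pw_Suc)
qed
lemma pw_1: "x \<in> {0..1} \<Longrightarrow> pw x 1 = x" by (simp add: pw_Suc[of x 0, simplified] S0)
lemma pw_2: "x \<in> {0..1} \<Longrightarrow> pw x 2 = S x x"
  by (simp add: numeral_2_eq_2 pw_Suc S0)
lemma pw_step: "x \<in> {0..1} \<Longrightarrow> 0 < x \<Longrightarrow> x < 1 \<Longrightarrow> pw x n < pw x (Suc n)"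
  unfolding pw_Suc using Sgt[of "pw x n" x] Sc[of x "pw x n"] pw_r pw_lt1 by simp
lemma pw_strict: "x \<in> {0..1} \<Longrightarrow> 0 < x \<Longrightarrow> x < 1 \<Longrightarrow> m < n \<Longrightarrow> pw x m < pw x n"
  using lift_Suc_mono_less[of "pw x"] pw_step by blast

lemma pw_to1:
  assumes x: "x \<in> {0..1}" "0 < x" "y < 1"
  shows "\<exists>n. y < pw x n"
proof (rule ccontr)
  assume "\<not> ?thesis"
  then have bd: "\<And>n. pw x n \<le> y" by (simp add: not_less)
  have inc: "incseq (pw x)"
    by (rule incseq_SucI) (metis Sge Sc pw_Suc pw_r x(1) order.refl)
  have bda: "bdd_above (range (pw x))" using bd by (intro bdd_aboveI[of _ y]) auto
  define L where "L = Sup (range (pw x))"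
  have lim: "pw x \<longlonglongrightarrow> L" unfolding L_def by (rule LIMSEQ_incseq_SUP[OF bda inc])
  have Ly: "L \<le> y" unfolding L_def using bd by (auto intro: cSup_least)
  have Lx: "pw x 1 \<le> L" unfolding L_def using bda by (auto intro: cSup_upper)
  then have Lx': "x \<le> L" using pw_1[OF x(1)] by simp
  have LI: "L \<in> {0..1}" using Lx' Ly x by auto
  have "(\<lambda>n. S x (pw x n)) \<longlonglongrightarrow> S x L"
    by (rule S_tendsto) (use x LI in \<open>auto intro: lim simp: pw_r0 pw_r1\<close>)
  moreover have "(\<lambda>n. S x (pw x n)) \<longlonglongrightarrow> L"
    using lim unfolding pw_Suc[symmetric] by (rule LIMSEQ_Suc)
  ultimately have "S x L = L" by (rule LIMSEQ_unique)
  moreover have "L < S x L" using Sst1[of 0 x L] S0' LI x Ly by auto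
  ultimately show False by simp
qed

definition hf :: "real \<Rightarrow> real" where
  "hf y = (THE z. z \<in> {0..1} \<and> S z z = y)"

lemma diag_strict: "z \<in> {0..1} \<Longrightarrow> z' \<in> {0..1} \<Longrightarrow> z < z' \<Longrightarrow> S z z < S z' z'"
proof -
  assume a: "z \<in> {0..1}" "z' \<in> {0..1}" "z < z'"
  show ?thesis
  proof (cases "z' = 1")
    case True then show ?thesis using a Slt1[of z z] S1 by auto
  next
    case False
    then have "S z z < S z' z" using a by (intro Sst1) auto
    also have "\<dots> \<le> S z' z'" using a by (intro Sm2) auto
    finally show ?thesis .
  qed
qed

lemma hf_ex: assumes "y \<in> {0..1}" shows "\<exists>!z. z \<in> {0..1} \<and> S z z = y"
proof -
  have c: "continuous_on {0..1} (\<lambda>z. S z z)"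
  proof -
    have "continuous_on {0..1} (\<lambda>z. (\<lambda>(x, y). S x y) (z, z))"
      by (rule continuous_on_compose2[OF Scont]) (auto intro!: continuous_intros)
    then show ?thesis by simp
  qed
  obtain z where "0 \<le> z" "z \<le> 1" "S z z = y"
    using IVT'[of "\<lambda>z. S z z" 0 y 1] c assms S0 S1 by auto
  moreover have "z1 = z2" if "z1 \<in> {0..1}" "S z1 z1 = y" "z2 \<in> {0..1}" "S z2 z2 = y" for z1 z2
    using diag_strict that by (metis less_irrefl linorder_neqE)
  ultimately show ?thesis by auto
qed

lemma hf: "y \<in> {0..1} \<Longrightarrow> hf y \<in> {0..1} \<and> S (hf y) (hf y) = y"
  unfolding hf_def by (rule theI') (rule hf_ex)

lemma hf_open: "0 < y \<Longrightarrow> y < 1 \<Longrightarrow> 0 < hf y \<and> hf y < 1"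
proof -
  assume a: "0 < y" "y < 1"
  then have h: "hf y \<in> {0..1}" "S (hf y) (hf y) = y" using hf[of y] by auto
  have "hf y \<noteq> 0" using h a S0 by auto
  moreover have "hf y \<noteq> 1" using h a S1 by auto
  ultimately show ?thesis using h by auto
qed

definition d :: "nat \<Rightarrow> real" where
  "d k = (hf ^^ k) (1/2)"

lemma d_Suc: "d (Suc k) = hf (d k)" by (simp add: d_def)
lemma d_open: "0 < d k \<and> d k < 1"
  by (induction k) (auto simp: d_def hf_open)
lemma d_I: "d k \<in> {0..1}" using d_open[of k] by auto
lemma d_I0: "0 \<le> d k" using d_open[of k] by auto
lemma d_I1: "d k \<le> 1" using d_open[of k] by auto
lemma d_sq: "S (d (Suc k)) (d (Suc k)) = d k"
  using hf[OF d_I[of k]] by (simp add: d_Suc)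

lemma d_small: assumes "0 < e" shows "\<exists>K. d K < e"
proof (rule ccontr)
  assume "\<not> ?thesis"
  then have bd: "\<And>k. e \<le> d k" by (simp add: not_less)
  have dec: "decseq d"
  proof (rule decseq_SucI)
    fix k show "d (Suc k) \<le> d k" using Sge[of "d (Suc k)" "d (Suc k)"] d_sq d_I by metis
  qed
  have bdb: "bdd_below (range d)" using bd by (intro bdd_belowI[of _ e]) auto
  define L where "L = Inf (range d)"
  have lim: "d \<longlonglongrightarrow> L" unfolding L_def by (rule LIMSEQ_decseq_INF[OF bdb dec])
  have Le: "e \<le> L" unfolding L_def using bd by (auto intro: cInf_greatest)
  have Ld: "L \<le> d 0" unfolding L_def using bdb by (auto intro: cInf_lower)
  have LI: "L \<in> {0..1}" using Le Ld d_open[of 0] assms by auto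
  have L1: "L < 1" using Ld d_open[of 0] by auto
  have "(\<lambda>n. S (d (Suc n)) (d (Suc n))) \<longlonglongrightarrow> S L L"
    by (rule S_tendsto) (use LI in \<open>auto intro: LIMSEQ_Suc[OF lim] simp: d_I0 d_I1\<close>)
  moreover have "(\<lambda>n. S (d (Suc n)) (d (Suc n))) \<longlonglongrightarrow> L"
    unfolding d_sq by (rule lim)
  ultimately have "S L L = L" by (rule LIMSEQ_unique)
  moreover have "L < S L L" using Sgt[of L L] LI L1 Le assms by auto
  ultimately show False by simp
qed

end

context stc begin

definition D :: "nat \<Rightarrow> nat \<Rightarrow> real" where
  "D k m = pw (d k) m"

lemma D_0[simp]: "D k 0 = 0" by (simp add: D_def)
lemma D_r0: "0 \<le> D k m" by (simp add: D_def pw_r0 d_I0 d_I1)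
lemma D_r1: "D k m \<le> 1" by (simp add: D_def pw_r1 d_I0 d_I1)
lemma D_lt1: "D k m < 1" unfolding D_def using pw_lt1 d_open d_I by auto
lemma D_I: "D k m \<in> {0..1}" using D_r0 D_r1 by auto
lemma D_add: "D k (m + n) = S (D k m) (D k n)" unfolding D_def by (rule pw_add[OF d_I])
lemma D_Suc2: "D (Suc k) (2 * m) = D k m"
  unfolding D_def pw_mult[OF d_I] pw_2[OF d_I] d_sq ..
lemma D_lift: "D (k + j) (m * 2 ^ j) = D k m"
proof (induction j)
  case 0 then show ?case by simp
next
  case (Suc j)
  have "D (k + Suc j) (m * 2 ^ Suc j) = D (Suc (k + j)) (2 * (m * 2 ^ j))"
    by (simp add: algebra_simps)
  also have "\<dots> = D k m" by (simp add: D_Suc2 Suc)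
  finally show ?case .
qed
lemma D_strict: "m < n \<Longrightarrow> D k m < D k n"
  unfolding D_def using pw_strict d_open d_I by auto
lemma D_mono: "m \<le> n \<Longrightarrow> D k m \<le> D k n"
  using D_strict by (cases "m = n") (auto simp: order.order_iff_strict)
lemma D_2: "D (Suc k) 2 = d k"
  using D_Suc2[of k 1] S0[OF d_I[of k]] by (simp add: D_def pw_Suc)

lemma D_cmp:
  assumes "real m / 2 ^ k \<le> real m' / 2 ^ k'"
  shows "D k m \<le> D k' m'"
proof -
  have "real m * 2 ^ k' \<le> real m' * 2 ^ k"
    using assms by (simp add: field_simps)
  then have "real (m * 2 ^ k') \<le> real (m' * 2 ^ k)" by simp
  then have le: "m * 2 ^ k' \<le> m' * 2 ^ k" by linarith
  have "D k m = D (k + k') (m * 2 ^ k')" by (simp add: D_lift)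
  also have "\<dots> \<le> D (k + k') (m' * 2 ^ k)" by (rule D_mono[OF le])
  also have "\<dots> = D k' m'" using D_lift[of k' k m'] by (simp add: add.commute)
  finally show ?thesis .
qed

definition fD :: "real \<Rightarrow> real" where
  "fD r = (SUP k. D k (nat \<lfloor>r * 2 ^ k\<rfloor>))"

lemma fD_bdd: "bdd_above (range (\<lambda>k. D k (nat \<lfloor>r * 2 ^ k\<rfloor>)))"
  using D_r1 by (intro bdd_aboveI[of _ 1]) auto

lemma fD_ge: "D k (nat \<lfloor>r * 2 ^ k\<rfloor>) \<le> fD r"
  unfolding fD_def by (rule cSUP_upper[OF _ fD_bdd]) simp

lemma fD_le: "(\<And>k. D k (nat \<lfloor>r * 2 ^ k\<rfloor>) \<le> B) \<Longrightarrow> fD r \<le> B"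
  unfolding fD_def by (rule cSUP_least) auto

lemma floor_dy: "real (nat \<lfloor>r * 2 ^ k\<rfloor>) / 2 ^ k \<le> r" if "0 \<le> r"
proof -
  have "real (nat \<lfloor>r * 2 ^ k\<rfloor>) \<le> r * 2 ^ k" using that by simp
  then show ?thesis by (simp add: field_simps)
qed

lemma floor_dy2: "r < (real (nat \<lfloor>r * 2 ^ k\<rfloor>) + 1) / 2 ^ k" if "0 \<le> r"
proof -
  have "r * 2 ^ k < real (nat \<lfloor>r * 2 ^ k\<rfloor>) + 1" using that by linarith
  then show ?thesis by (simp add: field_simps)
qed

lemma fD_dy: "fD (real m / 2 ^ k) = D k m"
proof (rule antisym)
  show "fD (real m / 2 ^ k) \<le> D k m"
  proof (rule fD_le)
    fix j
    show "D j (nat \<lfloor>real m / 2 ^ k * 2 ^ j\<rfloor>) \<le> D k m"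
      by (rule D_cmp) (rule floor_dy, simp)
  qed
  have "D k (nat \<lfloor>real m / 2 ^ k * 2 ^ k\<rfloor>) \<le> fD (real m / 2 ^ k)" by (rule fD_ge)
  then show "D k m \<le> fD (real m / 2 ^ k)" by simp
qed

lemma fD_nat: "fD (real n) = D 0 n"
  using fD_dy[of n 0] by simp

lemma fD_mono: "r \<le> r' \<Longrightarrow> fD r \<le> fD r'"
proof (rule fD_le)
  fix k assume "r \<le> r'"
  have "D k (nat \<lfloor>r * 2 ^ k\<rfloor>) \<le> D k (nat \<lfloor>r' * 2 ^ k\<rfloor>)"
    using \<open>r \<le> r'\<close> by (intro D_mono nat_mono floor_mono) simp
  also have "\<dots> \<le> fD r'" by (rule fD_ge)
  finally show "D k (nat \<lfloor>r * 2 ^ k\<rfloor>) \<le> fD r'" .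
qed

lemma fD_0: "fD 0 = 0" using fD_dy[of 0 0] by simp

lemma fD_nonneg: "0 \<le> fD r"
  using fD_ge[of 0 r] D_r0[of 0] by (meson order_trans)

lemma fD_lt1: "fD r < 1"
proof -
  have "fD r \<le> fD (real (nat \<lceil>r\<rceil>))" by (rule fD_mono) linarith
  also have "\<dots> < 1" by (simp add: fD_nat D_lt1)
  finally show ?thesis .
qed

lemma fD_I: "fD r \<in> {0..1}" using fD_nonneg fD_lt1[of r] by auto

lemma fD_strict:
  assumes "0 \<le> r" "r < r'"
  shows "fD r < fD r'"
proof -
  obtain k where k: "(1/2::real) ^ k < (r' - r) / 2"
    using real_arch_pow_inv[of "(r' - r)/2" "1/2::real"] assms by auto
  define n where "n = nat \<lfloor>r * 2 ^ k\<rfloor>"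
  have "r < (real n + 1) / 2 ^ k" unfolding n_def by (rule floor_dy2[OF assms(1)])
  then have "fD r \<le> fD (real (n + 1) / 2 ^ k)" by (intro fD_mono) (simp add: add.commute)
  also have "\<dots> = D k (n + 1)" by (rule fD_dy)
  also have "\<dots> < D k (n + 2)" by (rule D_strict) simp
  also have "\<dots> = fD (real (n + 2) / 2 ^ k)" by (rule fD_dy[symmetric])
  also have "\<dots> \<le> fD r'"
  proof (rule fD_mono)
    have "real n / 2 ^ k \<le> r" unfolding n_def by (rule floor_dy[OF assms(1)])
    moreover have "2 / (2::real) ^ k < r' - r" using k by (simp add: power_one_over field_simps)
    ultimately have "(real n + 2) / 2 ^ k < r'" by (simp add: add_divide_distrib)
    then show "real (n + 2) / 2 ^ k \<le> r'" by (simp add: add.commute)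
  qed
  finally show ?thesis .
qed

lemma S_unif:
  assumes "0 < e"
  shows "\<exists>\<delta>>0. \<forall>u\<in>{0..1}. \<forall>v\<in>{0..1}. v < \<delta> \<longrightarrow> S u v < u + e"
proof -
  have "uniformly_continuous_on ({0..1} \<times> {0..1}) (\<lambda>(x, y). S x y)"
    by (rule compact_uniformly_continuous[OF Scont]) (intro compact_Times compact_Icc)
  then obtain \<delta> where \<delta>: "\<delta> > 0"
    "\<And>p p'. p \<in> {0..1} \<times> {0..1} \<Longrightarrow> p' \<in> {0..1} \<times> {0..1} \<Longrightarrow> dist p' p < \<delta> \<Longrightarrow>
       dist ((\<lambda>(x, y). S x y) p') ((\<lambda>(x, y). S x y) p) < e"
    unfolding uniformly_continuous_on_def using assms by metis
  show ?thesis
  proof (intro exI[of _ \<delta>] conjI ballI impI)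
    fix u v :: real assume uv: "u \<in> {0..1}" "v \<in> {0..1}" "v < \<delta>"
    have "dist (u, v) (u, 0) < \<delta>" using uv by (simp add: dist_Pair_Pair dist_real_def)
    then have "dist (S u v) (S u 0) < e" using \<delta>(2)[of "(u, 0)" "(u, v)"] uv by auto
    then show "S u v < u + e" using S0[of u] uv by (simp add: dist_real_def)
  qed (rule \<delta>(1))
qed

lemma fD_ucont:
  assumes "0 < e"
  shows "\<exists>k. \<forall>r r'. 0 \<le> r \<longrightarrow> r \<le> r' \<longrightarrow> r' < r + 1 / 2 ^ k \<longrightarrow> fD r' < fD r + e"
proof -
  obtain \<delta> where \<delta>: "\<delta> > 0" "\<And>u v. u \<in> {0..1} \<Longrightarrow> v \<in> {0..1} \<Longrightarrow> v < \<delta> \<Longrightarrow> S u v < u + e"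
    using S_unif[OF assms] by auto
  obtain K where K: "d K < \<delta>" using d_small[OF \<delta>(1)] by auto
  show ?thesis
  proof (intro exI[of _ "Suc K"] allI impI)
    fix r r' :: real assume r: "0 \<le> r" "r \<le> r'" "r' < r + 1 / 2 ^ Suc K"
    define k where "k = Suc K"
    define n where "n = nat \<lfloor>r * 2 ^ k\<rfloor>"
    have "r < (real n + 1) / 2 ^ k" unfolding n_def by (rule floor_dy2[OF r(1)])
    then have "r' < real (n + 2) / 2 ^ k" using r(3) unfolding k_def[symmetric]
      by (simp add: add_divide_distrib)
    then have "fD r' \<le> fD (real (n + 2) / 2 ^ k)" by (intro fD_mono) simp
    also have "\<dots> = D k (n + 2)" by (rule fD_dy)
    also have "\<dots> = S (D k n) (d K)" using D_add[of k n 2] D_2[of K] by (simp add: k_def)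
    also have "\<dots> < D k n + e" by (rule \<delta>(2)) (auto simp: D_r0 D_r1 d_I0 d_I1 K)
    also have "D k n = fD (real n / 2 ^ k)" by (rule fD_dy[symmetric])
    also have "\<dots> \<le> fD r" unfolding n_def by (intro fD_mono floor_dy r(1))
    finally show "fD r' < fD r + e" by simp
  qed
qed

lemma fD_cont: "continuous_on {0..} fD"
  unfolding continuous_on_iff
proof (intro ballI allI impI)
  fix x e :: real assume x: "x \<in> {0..}" and e: "0 < e"
  obtain k where k: "\<And>r r'. 0 \<le> r \<Longrightarrow> r \<le> r' \<Longrightarrow> r' < r + 1 / 2 ^ k \<Longrightarrow> fD r' < fD r + e"
    using fD_ucont[OF e] by auto
  show "\<exists>d>0. \<forall>x'\<in>{0..}. dist x' x < d \<longrightarrow> dist (fD x') (fD x) < e"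
  proof (intro exI[of _ "1 / 2 ^ k"] conjI ballI impI)
    fix x' :: real assume x': "x' \<in> {0..}" "dist x' x < 1 / 2 ^ k"
    show "dist (fD x') (fD x) < e"
    proof (cases "x \<le> x'")
      case True
      then have "fD x' < fD x + e" using x x' by (intro k) (auto simp: dist_real_def)
      moreover have "fD x \<le> fD x'" using True by (rule fD_mono)
      ultimately show ?thesis by (simp add: dist_real_def)
    next
      case False
      then have "fD x < fD x' + e" using x x' by (intro k) (auto simp: dist_real_def)
      moreover have "fD x' \<le> fD x" using False by (intro fD_mono) simp
      ultimately show ?thesis by (simp add: dist_real_def)
    qed
  qed simp
qed

end

context stc begin

lemma dy_tendsto:
  assumes "0 \<le> x"
  shows "(\<lambda>k. real (nat \<lfloor>x * 2 ^ k\<rfloor>) / 2 ^ k) \<longlonglongrightarrow> x"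
proof (rule tendsto_sandwich[of "\<lambda>k. x - (1/2) ^ k" _ _ "\<lambda>k. x"])
  show "\<forall>\<^sub>F k in sequentially. x - (1 / 2) ^ k \<le> real (nat \<lfloor>x * 2 ^ k\<rfloor>) / 2 ^ k"
  proof (intro always_eventually allI)
    fix k :: nat
    have "x < (real (nat \<lfloor>x * 2 ^ k\<rfloor>) + 1) / 2 ^ k" by (rule floor_dy2[OF assms])
    then show "x - (1 / 2) ^ k \<le> real (nat \<lfloor>x * 2 ^ k\<rfloor>) / 2 ^ k"
      by (simp add: add_divide_distrib power_one_over)
  qed
  show "\<forall>\<^sub>F k in sequentially. real (nat \<lfloor>x * 2 ^ k\<rfloor>) / 2 ^ k \<le> x"
    by (intro always_eventually allI floor_dy assms)
  have "(\<lambda>k. x - (1/2::real) ^ k) \<longlonglongrightarrow> x - 0"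
    by (intro tendsto_intros LIMSEQ_realpow_zero) auto
  then show "(\<lambda>k. x - (1/2::real) ^ k) \<longlonglongrightarrow> x" by simp
qed simp

lemma fD_add:
  assumes x: "0 \<le> x" and y: "0 \<le> y"
  shows "fD (x + y) = S (fD x) (fD y)"
proof -
  define a where "a k = real (nat \<lfloor>x * 2 ^ k\<rfloor>) / 2 ^ k" for k :: nat
  define b where "b k = real (nat \<lfloor>y * 2 ^ k\<rfloor>) / 2 ^ k" for k :: nat
  have a: "a \<longlonglongrightarrow> x" unfolding a_def by (rule dy_tendsto[OF x])
  have b: "b \<longlonglongrightarrow> y" unfolding b_def by (rule dy_tendsto[OF y])
  have a0: "a k \<ge> 0" "b k \<ge> 0" for k by (auto simp: a_def b_def)
  have fa: "(\<lambda>k. fD (a k)) \<longlonglongrightarrow> fD x"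
    by (rule continuous_on_tendsto_compose[OF fD_cont a]) (use x a0 in auto)
  have fb: "(\<lambda>k. fD (b k)) \<longlonglongrightarrow> fD y"
    by (rule continuous_on_tendsto_compose[OF fD_cont b]) (use y a0 in auto)
  have fab: "(\<lambda>k. fD (a k + b k)) \<longlonglongrightarrow> fD (x + y)"
    by (rule continuous_on_tendsto_compose[OF fD_cont tendsto_add[OF a b]]) (use x y a0 in auto)
  have eq: "fD (a k + b k) = S (fD (a k)) (fD (b k))" for k
  proof -
    have "a k + b k = real (nat \<lfloor>x * 2 ^ k\<rfloor> + nat \<lfloor>y * 2 ^ k\<rfloor>) / 2 ^ k"
      by (simp add: a_def b_def add_divide_distrib)
    then have "fD (a k + b k) = D k (nat \<lfloor>x * 2 ^ k\<rfloor> + nat \<lfloor>y * 2 ^ k\<rfloor>)"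
      by (simp only: fD_dy)
    also have "\<dots> = S (fD (a k)) (fD (b k))" by (simp add: D_add a_def b_def fD_dy)
    finally show ?thesis .
  qed
  have "(\<lambda>k. S (fD (a k)) (fD (b k))) \<longlonglongrightarrow> S (fD x) (fD y)"
    by (rule S_tendsto[OF fa fb]) (auto simp: fD_nonneg less_imp_le[OF fD_lt1])
  then have "(\<lambda>k. fD (a k + b k)) \<longlonglongrightarrow> S (fD x) (fD y)" by (simp add: eq)
  then show ?thesis using fab LIMSEQ_unique by blast
qed

lemma fD_surj:
  assumes "0 \<le> y" "y < 1"
  shows "\<exists>r\<ge>0. fD r = y"
proof -
  have "(1/2::real) \<in> {0..1}" by simp
  then obtain n where n: "y < pw (1/2) n" using pw_to1[of "1/2" y] assms by auto
  have "pw (1/2) n = fD (real n)" by (simp add: fD_nat D_def d_def)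
  then have "fD 0 \<le> y" "y \<le> fD (real n)" using n assms fD_0 by auto
  moreover have "continuous_on {0..real n} fD"
    by (rule continuous_on_subset[OF fD_cont]) auto
  ultimately obtain r where "0 \<le> r" "r \<le> real n" "fD r = y"
    using IVT'[of fD 0 y "real n"] by auto
  then show ?thesis by auto
qed

definition psi :: "real \<Rightarrow> real" where
  "psi v = (if v < 1 then fD (- ln (1 - v)) else 1)"

lemma psi_hom:
  assumes v: "v \<in> {0..1}" and w: "w \<in> {0..1}"
  shows "S (psi v) (psi w) = psi (SP v w)"
proof (cases "v = 1 \<or> w = 1")
  case True
  then have "SP v w = 1" by (auto simp: SP_def)
  moreover have "S (psi v) (psi w) = 1"
    using True S1[of "psi w"] S1'[of "psi v"] fD_I by (auto simp: psi_def)
  ultimately show ?thesis by (simp add: psi_def)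
next
  case False
  then have v1: "v < 1" and w1: "w < 1" using v w by auto
  have e: "1 - SP v w = (1 - v) * (1 - w)" by (simp add: SP_def algebra_simps)
  have "0 < (1 - v) * (1 - w)" using v1 w1 by simp
  then have s: "SP v w < 1" using e by linarith
  have "- ln (1 - SP v w) = - ln (1 - v) + - ln (1 - w)"
    using v1 w1 by (simp add: e ln_mult)
  moreover have "- ln (1 - v) \<ge> 0" "- ln (1 - w) \<ge> 0" using v w v1 w1 by auto
  ultimately have "fD (- ln (1 - SP v w)) = S (fD (- ln (1 - v))) (fD (- ln (1 - w)))"
    using fD_add by metis
  then show ?thesis using v1 w1 s by (simp add: psi_def)
qed

lemma psi_strict: "strict_mono_on {0..1} psi"
proof (rule strict_mono_onI)
  fix v w :: real assume a: "v \<in> {0..1}" "w \<in> {0..1}" "v < w"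
  show "psi v < psi w"
  proof (cases "w < 1")
    case True
    have "- ln (1 - v) < - ln (1 - w)" using a True by simp
    moreover have "0 \<le> - ln (1 - v)" using a True by simp
    ultimately show ?thesis using a True by (simp add: psi_def fD_strict)
  next
    case False
    then show ?thesis using a fD_lt1 by (simp add: psi_def)
  qed
qed

lemma psi_img: "psi ` {0..1} = {0..1}"
proof (intro set_eqI iffI)
  fix z assume "z \<in> psi ` {0..1}"
  then show "z \<in> {0..1}" using fD_I by (auto simp: psi_def)
next
  fix z :: real assume z: "z \<in> {0..1}"
  show "z \<in> psi ` {0..1}"
  proof (cases "z = 1")
    case True then show ?thesis by (auto simp: psi_def intro!: image_eqI[of _ _ 1])
  next
    case False
    then obtain r where r: "r \<ge> 0" "fD r = z" using fD_surj[of z] z by auto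
    have "psi (1 - exp (- r)) = z" using r by (simp add: psi_def)
    moreover have "1 - exp (- r) \<in> {0..1}" using r by auto
    ultimately show ?thesis by (auto intro!: image_eqI[of _ _ "1 - exp (- r)"])
  qed
qed

lemma psi_exists:
  "\<exists>psi. strict_mono_on {0..1} psi \<and> psi ` {0..1} = {0..1} \<and> continuous_on {0..1} psi \<and>
     (\<forall>v\<in>{0..1}. \<forall>w\<in>{0..1}. S (psi v) (psi w) = psi (SP v w))"
proof (intro exI[of _ psi] conjI ballI)
  show "continuous_on {0..1} psi"
    by (rule mono_surj_cont[OF strict_mono_on_imp_mono_on[OF psi_strict] psi_img])
qed (auto simp: psi_strict psi_img psi_hom)

end


lemma SP_comm: "SP v w = SP w v" by (simp add: SP_def algebra_simps)
lemma SP_assoc: "SP (SP u v) w = SP u (SP v w)" by (simp add: SP_def algebra_simps)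
lemma SP_0: "SP v 0 = v" by (simp add: SP_def)
lemma SP_one: "SP v w = 1 \<longleftrightarrow> v = 1 \<or> w = 1"
proof -
  have "1 - SP v w = (1 - v) * (1 - w)" by (simp add: SP_def algebra_simps)
  then show ?thesis by auto
qed
lemma SP_zero: "v \<in> {0..1} \<Longrightarrow> w \<in> {0..1} \<Longrightarrow> SP v w = 0 \<longleftrightarrow> v = 0 \<and> w = 0"
proof -
  assume a: "v \<in> {0..1}" "w \<in> {0..1}"
  have "SP v w = v * (1 - w) + w" by (simp add: SP_def algebra_simps)
  moreover have "v * (1 - w) \<ge> 0" using a by auto
  moreover have "v * (1 - w) = 0 \<longleftrightarrow> v = 0" if "w = 0" using that by simp
  moreover have "w \<ge> 0" using a by simp
  ultimately show ?thesis by (metis add.right_neutral add_nonneg_eq_0_iff)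
qed
lemma SP_mono1: "w \<le> 1 \<Longrightarrow> v \<le> v' \<Longrightarrow> SP v w \<le> SP v' w"
proof -
  assume a: "w \<le> 1" "v \<le> v'"
  have "v * (1 - w) \<le> v' * (1 - w)" using a by (intro mult_right_mono) auto
  then show ?thesis by (simp add: SP_def algebra_simps)
qed
lemma SP_mono2: "v \<le> 1 \<Longrightarrow> w \<le> w' \<Longrightarrow> SP v w \<le> SP v w'"
  using SP_mono1[of v w w'] by (simp add: SP_comm)
lemma SP_strict1: "w < 1 \<Longrightarrow> v < v' \<Longrightarrow> SP v w < SP v' w"
proof -
  assume a: "w < 1" "v < v'"
  have "v * (1 - w) < v' * (1 - w)" using a by (intro mult_strict_right_mono) auto
  then show ?thesis by (simp add: SP_def algebra_simps)
qed

lemma SP_cont: "continuous_on ({0..1} \<times> {0..1}) (\<lambda>(x, y). \<phi> x + \<phi> y - \<phi> x * \<phi> y)"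
  if "continuous_on {0..1} \<phi>" for \<phi> :: "real \<Rightarrow> real"
proof -
  have c1: "continuous_on ({0..1} \<times> {0..1}) (\<lambda>p. \<phi> (fst p))"
    by (rule continuous_on_compose2[OF that continuous_on_fst[OF continuous_on_id]]) auto
  have c2: "continuous_on ({0..1} \<times> {0..1}) (\<lambda>p. \<phi> (snd p))"
    by (rule continuous_on_compose2[OF that continuous_on_snd[OF continuous_on_id]]) auto
  have "continuous_on ({0..1} \<times> {0..1}) (\<lambda>p. \<phi> (fst p) + \<phi> (snd p) - \<phi> (fst p) * \<phi> (snd p))"
    by (intro continuous_intros c1 c2)
  then show ?thesis by (simp add: case_prod_beta)
qed

lemma pa_facts:
  assumes "pseudo_automorphism H"
  shows "\<And>x. x \<in> {0..1} \<Longrightarrow> H x \<in> {0..1}" "continuous_on {0..1} H" "mono_on {0..1} H"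
    "\<And>x. x \<in> {0..1} \<Longrightarrow> H x = 1 \<longleftrightarrow> x = 1" "\<And>x. x \<in> {0..1} \<Longrightarrow> H x = 0 \<longleftrightarrow> x = 0"
  using assms unfolding pseudo_automorphism_def by auto

lemma bij_facts:
  fixes \<phi> :: "real \<Rightarrow> real"
  assumes sm: "strict_mono_on {0..1} \<phi>" and bij: "bij_betw \<phi> {0..1} {0..1}"
  shows "\<phi> 0 = 0" "\<phi> 1 = 1" "continuous_on {0..1} \<phi>" "\<phi> ` {0..1} = {0..1}"
    "\<And>x. x \<in> {0..1} \<Longrightarrow> \<phi> x \<in> {0..1}"
proof -
  show img: "\<phi> ` {0..1} = {0..1}" using bij by (simp add: bij_betw_def)
  show r: "\<And>x. x \<in> {0..1} \<Longrightarrow> \<phi> x \<in> {0..1}" using img by auto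
  obtain z where z: "z \<in> {0..1}" "\<phi> z = 0" using img by (metis atLeastAtMost_iff imageE order_refl zero_le_one)
  show "\<phi> 0 = 0"
  proof (cases "z = 0")
    case False
    then have "\<phi> 0 < \<phi> z" using z sm by (intro strict_mono_onD[OF sm]) auto
    then show ?thesis using z r[of 0] by auto
  qed (use z in auto)
  obtain z where z: "z \<in> {0..1}" "\<phi> z = 1" using img by (metis atLeastAtMost_iff imageE order_refl zero_le_one)
  show "\<phi> 1 = 1"
  proof (cases "z = 1")
    case False
    then have "\<phi> z < \<phi> 1" using z sm by (intro strict_mono_onD[OF sm]) auto
    then show ?thesis using z r[of 1] by auto
  qed (use z in auto)
  show "continuous_on {0..1} \<phi>"
    by (rule mono_surj_cont[OF strict_mono_on_imp_mono_on[OF sm] img])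
qed

lemma inv_facts:
  fixes \<phi> :: "real \<Rightarrow> real"
  assumes sm: "strict_mono_on {0..1} \<phi>" and bij: "bij_betw \<phi> {0..1} {0..1}"
  defines "\<psi> \<equiv> inv_into {0..1} \<phi>"
  shows "strict_mono_on {0..1} \<psi>" "bij_betw \<psi> {0..1} {0..1}"
    "\<And>x. x \<in> {0..1} \<Longrightarrow> \<psi> (\<phi> x) = x" "\<And>y. y \<in> {0..1} \<Longrightarrow> \<phi> (\<psi> y) = y"
    "\<And>y. y \<in> {0..1} \<Longrightarrow> \<psi> y \<in> {0..1}"
proof -
  show b: "bij_betw \<psi> {0..1} {0..1}" unfolding \<psi>_def by (rule bij_betw_inv_into[OF bij])
  show l: "\<And>x. x \<in> {0..1} \<Longrightarrow> \<psi> (\<phi> x) = x"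
    unfolding \<psi>_def using bij by (simp add: bij_betw_def inv_into_f_f)
  show r: "\<And>y. y \<in> {0..1} \<Longrightarrow> \<phi> (\<psi> y) = y"
    unfolding \<psi>_def using bij by (simp add: bij_betw_def f_inv_into_f)
  show i: "\<And>y. y \<in> {0..1} \<Longrightarrow> \<psi> y \<in> {0..1}" using b by (auto simp: bij_betw_def)
  show "strict_mono_on {0..1} \<psi>"
  proof (rule strict_mono_onI)
    fix v w :: real assume a: "v \<in> {0..1}" "w \<in> {0..1}" "v < w"
    show "\<psi> v < \<psi> w"
    proof (rule ccontr)
      assume "\<not> \<psi> v < \<psi> w"
      then have "\<psi> w \<le> \<psi> v" by simp
      then have "\<phi> (\<psi> w) \<le> \<phi> (\<psi> v)"
        using strict_mono_on_imp_mono_on[OF sm] i a by (auto simp: mono_on_def)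
      then show False using r a by simp
    qed
  qed
qed



lemma three_grouping:
  fixes \<phi> H :: "real \<Rightarrow> real" and G :: "real \<Rightarrow> real \<Rightarrow> real"
  assumes sm: "strict_mono_on {0..1} \<phi>" and bij: "bij_betw \<phi> {0..1} {0..1}"
    and pa: "pseudo_automorphism H"
    and eq: "\<forall>x\<in>{0..1}. \<forall>y\<in>{0..1}. G x y = H (\<phi> x + \<phi> y - \<phi> x * \<phi> y)"
  shows "grouping_function G"
proof -
  note bf = bij_facts[OF sm bij]
  note hf = pa_facts[OF pa]
  have eq': "G x y = H (SP (\<phi> x) (\<phi> y))" if "x \<in> {0..1}" "y \<in> {0..1}" for x y
    using eq that by (simp add: SP_def)
  have spr: "SP (\<phi> x) (\<phi> y) \<in> {0..1}" if "x \<in> {0..1}" "y \<in> {0..1}" for x y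
    using that bf(5) SP_range by blast
  have phi0: "\<phi> x = 0 \<longleftrightarrow> x = 0" if "x \<in> {0..1}" for x
    using that bf(1) bij unfolding bij_betw_def inj_on_def by (metis atLeastAtMost_iff order_refl zero_le_one)
  have phi1: "\<phi> x = 1 \<longleftrightarrow> x = 1" if "x \<in> {0..1}" for x
    using that bf(2) bij unfolding bij_betw_def inj_on_def by (metis atLeastAtMost_iff order_refl zero_le_one)
  have phimono: "\<phi> x \<le> \<phi> x'" if "x \<in> {0..1}" "x' \<in> {0..1}" "x \<le> x'" for x x'
    using strict_mono_on_imp_mono_on[OF sm] that by (auto simp: mono_on_def)
  show ?thesis
    unfolding grouping_function_def
  proof (intro conjI ballI impI)
    fix x y :: real assume x: "x \<in> {0..1}" and y: "y \<in> {0..1}"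
    show "G x y \<in> {0..1}" using eq' hf(1) spr x y by simp
    show "G x y = G y x" using eq' x y by (simp add: SP_comm)
    show "G x y = 0 \<longleftrightarrow> x = 0 \<and> y = 0"
      using eq' hf(5) spr x y SP_zero[OF bf(5) bf(5), OF x y] phi0 x y by simp
    show "G x y = 1 \<longleftrightarrow> x = 1 \<or> y = 1"
      using eq' hf(4) spr x y SP_one phi1 x y by simp
  next
    fix x x' y :: real assume x: "x \<in> {0..1}" and x': "x' \<in> {0..1}" and y: "y \<in> {0..1}" and le: "x \<le> x'"
    have "SP (\<phi> x) (\<phi> y) \<le> SP (\<phi> x') (\<phi> y)"
      using bf(5)[OF y] phimono[OF x x' le] by (intro SP_mono1) auto
    then show "G x y \<le> G x' y" using eq' x x' y hf(3) spr by (simp add: mono_on_def)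
  next
    fix x y y' :: real assume x: "x \<in> {0..1}" and y: "y \<in> {0..1}" and y': "y' \<in> {0..1}" and le: "y \<le> y'"
    have "SP (\<phi> x) (\<phi> y) \<le> SP (\<phi> x) (\<phi> y')"
      using bf(5)[OF x] phimono[OF y y' le] by (intro SP_mono2) auto
    then show "G x y \<le> G x y'" using eq' x y' y hf(3) spr by (simp add: mono_on_def)
  next
    have c: "continuous_on ({0..1} \<times> {0..1}) (\<lambda>p. H ((\<lambda>(x, y). \<phi> x + \<phi> y - \<phi> x * \<phi> y) p))"
      by (rule continuous_on_compose2[OF hf(2) SP_cont[OF bf(3)]]) (use spr in \<open>auto simp: SP_def\<close>)
    show "continuous_on ({0..1} \<times> {0..1}) (\<lambda>(x, y). G x y)"
      by (rule continuous_on_cong[THEN iffD1, OF refl _ c]) (use eq in auto)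
  qed
qed



lemma phi01:
  fixes \<phi> :: "real \<Rightarrow> real"
  assumes sm: "strict_mono_on {0..1} \<phi>" and bij: "bij_betw \<phi> {0..1} {0..1}" and x: "x \<in> {0..1}"
  shows "\<phi> x = 0 \<longleftrightarrow> x = 0" "\<phi> x = 1 \<longleftrightarrow> x = 1"
  using x bij_facts(1,2)[OF sm bij] bij unfolding bij_betw_def inj_on_def
  by (metis atLeastAtMost_iff order_refl zero_le_one)+

lemma sm_mono:
  fixes \<phi> :: "real \<Rightarrow> real"
  assumes sm: "strict_mono_on {0..1} \<phi>" "x \<in> {0..1}" "x' \<in> {0..1}" "x \<le> x'"
  shows "\<phi> x \<le> \<phi> x'"
  using strict_mono_on_imp_mono_on[OF sm(1)] sm by (auto simp: mono_on_def)

lemma comp_pa: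
  fixes \<phi> H :: "real \<Rightarrow> real"
  assumes sm: "strict_mono_on {0..1} \<phi>" and bij: "bij_betw \<phi> {0..1} {0..1}"
    and pa: "pseudo_automorphism H"
  shows "pseudo_automorphism (\<lambda>z. H (\<phi> z))"
proof -
  note bf = bij_facts[OF sm bij]
  note hf = pa_facts[OF pa]
  show ?thesis unfolding pseudo_automorphism_def
  proof (intro conjI ballI)
    show "continuous_on {0..1} (\<lambda>z. H (\<phi> z))"
      by (rule continuous_on_compose2[OF hf(2) bf(3)]) (use bf(5) in auto)
    show "mono_on {0..1} (\<lambda>z. H (\<phi> z))"
      using hf(3) bf(5) sm_mono[OF sm] by (auto simp: mono_on_def)
  qed (use hf(1,4,5) bf(5) phi01[OF sm bij] in auto)
qed

lemma three_two:
  fixes \<phi> H :: "real \<Rightarrow> real" and G :: "real \<Rightarrow> real \<Rightarrow> real"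
  assumes sm: "strict_mono_on {0..1} \<phi>" and bij: "bij_betw \<phi> {0..1} {0..1}"
    and pa: "pseudo_automorphism H"
    and eq: "\<forall>x\<in>{0..1}. \<forall>y\<in>{0..1}. G x y = H (\<phi> x + \<phi> y - \<phi> x * \<phi> y)"
  shows "grouping_function G \<and> (\<exists>F S. pseudo_automorphism F \<and> strict_t_conorm S \<and>
             (\<forall>x\<in>{0..1}. \<forall>y\<in>{0..1}. G x y = F (S x y)))"
proof -
  note bf = bij_facts[OF sm bij]
  note hf = pa_facts[OF pa]
  define \<psi> where "\<psi> = inv_into {0..1} \<phi>"
  note inf = inv_facts[OF sm bij, folded \<psi>_def]
  note bg = bij_facts[OF inf(1,2)]
  define S where "S x y = \<psi> (SP (\<phi> x) (\<phi> y))" for x y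
  have spr: "SP (\<phi> x) (\<phi> y) \<in> {0..1}" if "x \<in> {0..1}" "y \<in> {0..1}" for x y
    using that bf(5) SP_range by blast
  have Sr: "S x y \<in> {0..1}" if "x \<in> {0..1}" "y \<in> {0..1}" for x y
    unfolding S_def using that spr inf(5) by blast
  have phS: "\<phi> (S x y) = SP (\<phi> x) (\<phi> y)" if "x \<in> {0..1}" "y \<in> {0..1}" for x y
    unfolding S_def using inf(4) spr that by blast
  have "strict_t_conorm S"
    unfolding strict_t_conorm_def t_conorm_def
  proof (intro conjI ballI impI)
    fix x y :: real assume x: "x \<in> {0..1}" and y: "y \<in> {0..1}"
    show "S x y \<in> {0..1}" by (rule Sr[OF x y])
    show "S x y = S y x" by (simp add: S_def SP_comm)
  next
    fix x y z :: real assume x: "x \<in> {0..1}" and y: "y \<in> {0..1}" and z: "z \<in> {0..1}"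
    show "S (S x y) z = S x (S y z)"
      using phS[OF x y] phS[OF y z] by (simp add: S_def SP_assoc)
  next
    fix x x' y :: real assume x: "x \<in> {0..1}" and x': "x' \<in> {0..1}" and y: "y \<in> {0..1}" and le: "x \<le> x'"
    have "SP (\<phi> x) (\<phi> y) \<le> SP (\<phi> x') (\<phi> y)"
      using bf(5)[OF y] sm_mono[OF sm x x' le] by (intro SP_mono1) auto
    then show "S x y \<le> S x' y" unfolding S_def using sm_mono[OF inf(1)] spr x x' y by blast
  next
    fix x y y' :: real assume x: "x \<in> {0..1}" and y: "y \<in> {0..1}" and y': "y' \<in> {0..1}" and le: "y \<le> y'"
    have "SP (\<phi> x) (\<phi> y) \<le> SP (\<phi> x) (\<phi> y')"
      using bf(5)[OF x] sm_mono[OF sm y y' le] by (intro SP_mono2) auto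
    then show "S x y \<le> S x y'" unfolding S_def using sm_mono[OF inf(1)] spr x y y' by blast
  next
    fix x :: real assume x: "x \<in> {0..1}"
    show "S x 0 = x" using inf(3)[OF x] by (simp add: S_def bf(1) SP_0)
  next
    have c: "continuous_on ({0..1} \<times> {0..1}) (\<lambda>p. \<psi> ((\<lambda>(x, y). \<phi> x + \<phi> y - \<phi> x * \<phi> y) p))"
      by (rule continuous_on_compose2[OF bg(3) SP_cont[OF bf(3)]]) (use spr in \<open>auto simp: SP_def\<close>)
    show "continuous_on ({0..1} \<times> {0..1}) (\<lambda>(x, y). S x y)"
      by (rule continuous_on_cong[THEN iffD1, OF refl _ c]) (auto simp: S_def SP_def)
  next
    fix x x' y :: real assume x: "x \<in> {0..1}" and x': "x' \<in> {0..1}" and y: "y \<in> {0..1}"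
      and lt: "y < 1 \<and> x < x'"
    have "\<phi> y \<noteq> 1" using phi01(2)[OF sm bij y] lt by auto
    then have "\<phi> y < 1" using bf(5)[OF y] by auto
    moreover have "\<phi> x < \<phi> x'" using strict_mono_onD[OF sm] x x' lt by auto
    ultimately have "SP (\<phi> x) (\<phi> y) < SP (\<phi> x') (\<phi> y)" by (rule SP_strict1)
    then show "S x y < S x' y" unfolding S_def using strict_mono_onD[OF inf(1)] spr x x' y by blast
  qed
  moreover have "G x y = H (\<phi> (S x y))" if "x \<in> {0..1}" "y \<in> {0..1}" for x y
    using eq that phS by (simp add: SP_def)
  ultimately show ?thesis
    using three_grouping[OF sm bij pa eq] comp_pa[OF sm bij pa] by blast
qed

lemma two_three:
  fixes G :: "real \<Rightarrow> real \<Rightarrow> real"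
  assumes pa: "pseudo_automorphism F" and st: "strict_t_conorm S"
    and eq: "\<forall>x\<in>{0..1}. \<forall>y\<in>{0..1}. G x y = F (S x y)"
  shows "\<exists>\<phi> H. strict_mono_on {0..1} \<phi> \<and> bij_betw \<phi> {0..1} {0..1} \<and>
             pseudo_automorphism H \<and>
             (\<forall>x\<in>{0..1}. \<forall>y\<in>{0..1}. G x y = H (\<phi> x + \<phi> y - \<phi> x * \<phi> y))"
proof -
  interpret stc S by (rule stc.intro[OF st])
  obtain \<psi> where p: "strict_mono_on {0..1} \<psi>" "\<psi> ` {0..1} = {0..1}" "continuous_on {0..1} \<psi>"
     "\<And>v w. v \<in> {0..1} \<Longrightarrow> w \<in> {0..1} \<Longrightarrow> S (\<psi> v) (\<psi> w) = \<psi> (SP v w)"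
    using psi_exists by blast
  have bij: "bij_betw \<psi> {0..1} {0..1}"
    using p(1,2) strict_mono_on_imp_inj_on by (auto simp: bij_betw_def)
  define \<phi> where "\<phi> = inv_into {0..1} \<psi>"
  note inf = inv_facts[OF p(1) bij, folded \<phi>_def]
  show ?thesis
  proof (intro exI conjI ballI)
    show "strict_mono_on {0..1} \<phi>" by (rule inf(1))
    show "bij_betw \<phi> {0..1} {0..1}" by (rule inf(2))
    show "pseudo_automorphism (\<lambda>z. F (\<psi> z))" by (rule comp_pa[OF p(1) bij pa])
    fix x y :: real assume x: "x \<in> {0..1}" and y: "y \<in> {0..1}"
    have "G x y = F (S (\<psi> (\<phi> x)) (\<psi> (\<phi> y)))" using eq x y inf(4) by simp
    also have "\<dots> = F (\<psi> (SP (\<phi> x) (\<phi> y)))" using p(4) inf(5) x y by simp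
    finally show "G x y = F (\<psi> (\<phi> x + \<phi> y - \<phi> x * \<phi> y))" by (simp add: SP_def)
  qed
qed



lemma LL_0: "LL 0 = 0" by (simp add: LL_def)

lemma LL_inj: "v \<in> {0..1} \<Longrightarrow> w \<in> {0..1} \<Longrightarrow> LL v = LL w \<longleftrightarrow> v = w"
  by (metis PP_LL)

lemma three_one:
  fixes \<phi> H :: "real \<Rightarrow> real" and G :: "real \<Rightarrow> real \<Rightarrow> real" and a :: real
  assumes a: "a \<ge> 0" and sm: "strict_mono_on {0..1} \<phi>" and bij: "bij_betw \<phi> {0..1} {0..1}"
    and pa: "pseudo_automorphism H"
    and eq: "\<forall>x\<in>{0..1}. \<forall>y\<in>{0..1}. G x y = H (\<phi> x + \<phi> y - \<phi> x * \<phi> y)"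
  shows "\<exists>(t :: real \<Rightarrow> ennreal) (s :: ennreal \<Rightarrow> real).
             continuous_on {0..1} t \<and> strict_mono_on {0..1} t \<and>
             continuous_on UNIV s \<and> mono s \<and> (\<forall>u. s u \<in> {0..1}) \<and>
             (\<forall>x\<in>{0..1}. \<forall>y\<in>{0..1}. G x y = s (t x + t y)) \<and>
             grouping_function G \<and>
             ((\<forall>x\<in>{0..1}. t x = ennreal (a / 2) \<longleftrightarrow> x = 0) \<or>
              (\<forall>u. s u = 0 \<longleftrightarrow> u \<le> ennreal a))"
proof -
  note bf = bij_facts[OF sm bij]
  note hf = pa_facts[OF pa]
  define t where "t x = ennreal (a / 2) + LL (\<phi> x)" for x
  define inn where "inn u = max 0 (1 - exp a * (1 - PP u))" for u
  define s where "s u = H (inn u)" for u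
  have innr: "inn u \<in> {0..1}" for u
  proof -
    have "0 \<le> exp a * (1 - PP u)" using PP_range[of u] by auto
    then show ?thesis by (auto simp: inn_def)
  qed
  have spr: "SP (\<phi> x) (\<phi> y) \<in> {0..1}" if "x \<in> {0..1}" "y \<in> {0..1}" for x y
    using that bf(5) SP_range by blast
  have key: "s (t x + t y) = H (SP (\<phi> x) (\<phi> y))" if x: "x \<in> {0..1}" and y: "y \<in> {0..1}" for x y
  proof -
    have "t x + t y = ennreal (a / 2) + ennreal (a / 2) + (LL (\<phi> x) + LL (\<phi> y))"
      by (simp add: t_def algebra_simps)
    also have "\<dots> = ennreal a + LL (SP (\<phi> x) (\<phi> y))"
      using a LL_add[OF bf(5)[OF x] bf(5)[OF y]] by (simp add: ennreal_plus[symmetric] del: ennreal_plus)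
    finally have tt: "t x + t y = ennreal a + LL (SP (\<phi> x) (\<phi> y))" .
    have "PP (t x + t y) = SP (1 - exp (- a)) (SP (\<phi> x) (\<phi> y))"
      unfolding tt PP_add using a spr[OF x y] by (simp add: PP_ennreal PP_LL)
    then have "1 - PP (t x + t y) = exp (- a) * (1 - SP (\<phi> x) (\<phi> y))"
      by (simp add: SP_def algebra_simps)
    then have "exp a * (1 - PP (t x + t y)) = (exp a * exp (- a)) * (1 - SP (\<phi> x) (\<phi> y))"
      by simp
    also have "exp a * exp (- a) = 1" by (simp add: exp_minus_inverse)
    finally have "1 - exp a * (1 - PP (t x + t y)) = SP (\<phi> x) (\<phi> y)" by simp
    then have "inn (t x + t y) = SP (\<phi> x) (\<phi> y)" using spr[OF x y] by (simp add: inn_def)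
    then show ?thesis by (simp add: s_def)
  qed
  show ?thesis
  proof (intro exI[of _ t] exI[of _ s] conjI ballI allI disjI1)
    show "continuous_on {0..1} t" unfolding t_def
      by (intro continuous_on_add continuous_on_const continuous_on_compose2[OF LL_cont bf(3)]) auto
    show "strict_mono_on {0..1} t"
    proof (rule strict_mono_onI)
      fix x y :: real assume "x \<in> {0..1}" "y \<in> {0..1}" "x < y"
      then have "LL (\<phi> x) < LL (\<phi> y)"
        using bf(5) strict_mono_onD[OF sm] by (intro LL_strict) auto
      then show "t x < t y" by (simp add: t_def ennreal_add_left_cancel_less)
    qed
    have ci: "continuous_on UNIV inn" unfolding inn_def
      by (intro continuous_intros continuous_on_compose2[OF PP_cont continuous_on_id]) auto
    show "continuous_on UNIV s" unfolding s_def
      by (rule continuous_on_compose2[OF hf(2) ci]) (use innr in auto)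
    show "mono s"
    proof (rule monoI)
      fix u w :: ennreal assume "u \<le> w"
      then have "PP u \<le> PP w" by (rule PP_mono)
      then have "inn u \<le> inn w" unfolding inn_def by (intro max.mono) (auto intro!: mult_left_mono)
      then show "s u \<le> s w" unfolding s_def using hf(3) innr by (auto simp: mono_on_def)
    qed
    fix u show "s u \<in> {0..1}" unfolding s_def using hf(1) innr by auto
  next
    fix x y :: real assume x: "x \<in> {0..1}" and y: "y \<in> {0..1}"
    show "G x y = s (t x + t y)" using key[OF x y] eq x y by (simp add: SP_def)
  next
    show "grouping_function G" by (rule three_grouping[OF sm bij pa eq])
  next
    fix x :: real assume x: "x \<in> {0..1}"
    have "t x = ennreal (a / 2) \<longleftrightarrow> LL (\<phi> x) = LL 0"
      using ennreal_add_left_cancel[of "ennreal (a/2)" "LL (\<phi> x)" 0] by (simp add: t_def LL_0)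
    also have "\<dots> \<longleftrightarrow> \<phi> x = 0" using LL_inj bf(5) x by simp
    also have "\<dots> \<longleftrightarrow> x = 0" by (rule phi01(1)[OF sm bij x])
    finally show "t x = ennreal (a / 2) \<longleftrightarrow> x = 0" .
  qed
qed



lemma gf_facts:
  assumes "grouping_function G"
  shows "\<And>x y. x \<in> {0..1} \<Longrightarrow> y \<in> {0..1} \<Longrightarrow> G x y \<in> {0..1}"
    "\<And>x y. x \<in> {0..1} \<Longrightarrow> y \<in> {0..1} \<Longrightarrow> G x y = 0 \<longleftrightarrow> x = 0 \<and> y = 0"
    "\<And>x y. x \<in> {0..1} \<Longrightarrow> y \<in> {0..1} \<Longrightarrow> G x y = 1 \<longleftrightarrow> x = 1 \<or> y = 1"
proof -
  have A: "\<forall>x\<in>{0..1}. \<forall>y\<in>{0..1}. G x y \<in> {0..1}"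
    using assms unfolding grouping_function_def apply (elim conjE) apply assumption done
  have B: "\<forall>x\<in>{0..1}. \<forall>y\<in>{0..1}. G x y = 0 \<longleftrightarrow> x = 0 \<and> y = 0"
    using assms unfolding grouping_function_def apply (elim conjE) apply assumption done
  have C: "\<forall>x\<in>{0..1}. \<forall>y\<in>{0..1}. G x y = 1 \<longleftrightarrow> x = 1 \<or> y = 1"
    using assms unfolding grouping_function_def apply (elim conjE) apply assumption done
  show "\<And>x y. x \<in> {0..1} \<Longrightarrow> y \<in> {0..1} \<Longrightarrow> G x y \<in> {0..1}" using A by blast
  show "\<And>x y. x \<in> {0..1} \<Longrightarrow> y \<in> {0..1} \<Longrightarrow> G x y = 0 \<longleftrightarrow> x = 0 \<and> y = 0" using B by blast
  show "\<And>x y. x \<in> {0..1} \<Longrightarrow> y \<in> {0..1} \<Longrightarrow> G x y = 1 \<longleftrightarrow> x = 1 \<or> y = 1" using C by blast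
qed

lemma one_three:
  fixes G :: "real \<Rightarrow> real \<Rightarrow> real" and t :: "real \<Rightarrow> ennreal" and s :: "ennreal \<Rightarrow> real"
  assumes tc: "continuous_on {0..1} t" and ts: "strict_mono_on {0..1} t"
    and sc: "continuous_on UNIV s" and sm: "mono s" and sr: "\<forall>u. s u \<in> {0..1}"
    and eq: "\<forall>x\<in>{0..1}. \<forall>y\<in>{0..1}. G x y = s (t x + t y)"
    and g: "grouping_function G"
  shows "\<exists>\<phi> H. strict_mono_on {0..1} \<phi> \<and> bij_betw \<phi> {0..1} {0..1} \<and>
             pseudo_automorphism H \<and>
             (\<forall>x\<in>{0..1}. \<forall>y\<in>{0..1}. G x y = H (\<phi> x + \<phi> y - \<phi> x * \<phi> y))"
proof -
  note gf = gf_facts[OF g]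
  have t01: "t 0 < t 1" by (rule strict_mono_onD[OF ts]) auto
  have t1: "t 1 = \<infinity>"
  proof (rule ccontr)
    assume t1: "t 1 \<noteq> \<infinity>"
    define xs where "xs n = 1 + - inverse (real (Suc n))" for n :: nat
    have xsI': "0 \<le> xs n \<and> xs n \<le> 1" for n
    proof -
      have "inverse (real (Suc n)) \<le> 1" "0 \<le> inverse (real (Suc n))"
        by (auto simp: inverse_le_1_iff)
      then show ?thesis by (simp add: xs_def)
    qed
    have xsI: "xs n \<in> {0..1}" for n using xsI'[of n] by simp
    have xs1: "xs n < 1" for n by (simp add: xs_def)
    have xsl: "xs \<longlonglongrightarrow> 1" unfolding xs_def[abs_def] by (rule LIMSEQ_inverse_real_of_nat_add_minus)
    have hc: "continuous_on {0..1} (\<lambda>x. t x + t x)" by (intro continuous_on_add tc)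
    have "(\<lambda>n. t (xs n) + t (xs n)) \<longlonglongrightarrow> t 1 + t 1"
      by (rule continuous_on_tendsto_compose[OF hc xsl]) (auto simp: xsI')
    moreover have "t 0 + t 1 < t 1 + t 1"
      using t1 t01 ennreal_add_left_cancel_less[of "t 1" "t 0" "t 1"] by (simp add: add.commute)
    ultimately have "\<forall>\<^sub>F n in sequentially. t 0 + t 1 < t (xs n) + t (xs n)"
      by (rule order_tendstoD(1))
    then obtain n where n: "t 0 + t 1 < t (xs n) + t (xs n)" by (auto simp: eventually_sequentially)
    have "1 = G 0 1" using gf(3)[of 0 1] by simp
    also have "\<dots> = s (t 0 + t 1)" using eq by simp
    also have "\<dots> \<le> s (t (xs n) + t (xs n))" using n by (intro monoD[OF sm]) simp
    also have "\<dots> = G (xs n) (xs n)" using eq xsI by simp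
    finally have ge: "1 \<le> G (xs n) (xs n)" .
    have "G (xs n) (xs n) \<le> 1" using gf(1)[OF xsI[of n] xsI[of n]] by simp
    with ge have "G (xs n) (xs n) = 1" by (rule antisym[rotated])
    then show False using gf(3)[OF xsI xsI] xs1[of n] by simp
  qed
  have t0: "t 0 \<noteq> \<infinity>" using t01 t1 by auto
  define c where "c = 1 - PP (t 0)"
  have c: "0 < c" using PP_lt1[OF t0] by (simp add: c_def)
  define \<phi> where "\<phi> x = 1 - (1 - PP (t x)) / c" for x
  define H where "H v = s (LL (1 - (1 - v) * c ^ 2))" for v
  have phs: "strict_mono_on {0..1} \<phi>"
  proof (rule strict_mono_onI)
    fix x y :: real assume "x \<in> {0..1}" "y \<in> {0..1}" "x < y"
    then have "PP (t x) < PP (t y)" using strict_mono_onD[OF ts] PP_strict by auto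
    then show "\<phi> x < \<phi> y" using c by (simp add: \<phi>_def divide_strict_right_mono)
  qed
  have ph0: "\<phi> 0 = 0" using c by (simp add: \<phi>_def c_def)
  have ph1: "\<phi> 1 = 1" by (simp add: \<phi>_def t1 PP_def)
  have phc: "continuous_on {0..1} \<phi>" unfolding \<phi>_def
    by (intro continuous_intros continuous_on_compose2[OF PP_cont tc]) (use c in auto)
  have phr: "\<phi> x \<in> {0..1}" if "x \<in> {0..1}" for x
  proof -
    have "\<phi> 0 \<le> \<phi> x" "\<phi> x \<le> \<phi> 1" using that by (auto intro!: sm_mono[OF phs])
    then show ?thesis using ph0 ph1 by simp
  qed
  have img: "\<phi> ` {0..1} = {0..1}"
  proof (intro set_eqI iffI)
    fix v assume "v \<in> \<phi> ` {0..1}" then show "v \<in> {0..1}" using phr by auto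
  next
    fix v :: real assume v: "v \<in> {0..1}"
    then obtain x where "0 \<le> x" "x \<le> 1" "\<phi> x = v"
      using IVT'[of \<phi> 0 v 1] ph0 ph1 phc by auto
    then show "v \<in> \<phi> ` {0..1}" by auto
  qed
  have bij: "bij_betw \<phi> {0..1} {0..1}"
    using img strict_mono_on_imp_inj_on[OF phs] by (simp add: bij_betw_def)
  have key: "G x y = H (SP (\<phi> x) (\<phi> y))" if x: "x \<in> {0..1}" and y: "y \<in> {0..1}" for x y
  proof -
    have e1: "1 - SP v w = (1 - v) * (1 - w)" for v w by (simp add: SP_def algebra_simps)
    have e2: "1 - \<phi> z = (1 - PP (t z)) / c" for z by (simp add: \<phi>_def)
    have "(1 - SP (\<phi> x) (\<phi> y)) * c ^ 2 = ((1 - PP (t x)) / c) * ((1 - PP (t y)) / c) * c ^ 2"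
      by (simp only: e1 e2)
    also have "\<dots> = (1 - PP (t x)) * (1 - PP (t y))" using c by (simp add: power2_eq_square)
    also have "\<dots> = 1 - SP (PP (t x)) (PP (t y))" by (simp only: e1)
    finally have "1 - (1 - SP (\<phi> x) (\<phi> y)) * c ^ 2 = SP (PP (t x)) (PP (t y))" by simp
    also have "\<dots> = PP (t x + t y)" by (simp add: PP_add)
    finally show ?thesis using eq x y by (simp add: H_def LL_PP)
  qed
  have pa: "pseudo_automorphism H"
    unfolding pseudo_automorphism_def
  proof (intro conjI ballI)
    fix v :: real assume v: "v \<in> {0..1}"
    show "H v \<in> {0..1}" using sr by (simp add: H_def)
    have "v \<in> \<phi> ` {0..1}" using img v by simp
    then obtain x where x: "x \<in> {0..1}" "\<phi> x = v" by (rule imageE) simp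
    have Hv: "H v = G x 0" using key[OF x(1), of 0] x ph0 by (simp add: SP_0)
    show "H v = 1 \<longleftrightarrow> v = 1" using Hv gf(3)[OF x(1), of 0] phi01(2)[OF phs bij x(1)] x by simp
    show "H v = 0 \<longleftrightarrow> v = 0" using Hv gf(2)[OF x(1), of 0] phi01(1)[OF phs bij x(1)] x by simp
  next
    show "continuous_on {0..1} H" unfolding H_def
      by (intro continuous_on_compose2[OF sc continuous_on_compose2[OF LL_cont]] continuous_intros) auto
    show "mono_on {0..1} H"
    proof (rule mono_onI)
      fix v w :: real assume "v \<in> {0..1}" "w \<in> {0..1}" "v \<le> w"
      then have "1 - (1 - v) * c ^ 2 \<le> 1 - (1 - w) * c ^ 2" by (simp add: mult_right_mono)
      then have "LL (1 - (1 - v) * c ^ 2) \<le> LL (1 - (1 - w) * c ^ 2)" by (rule LL_mono)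
      then show "H v \<le> H w" unfolding H_def by (rule monoD[OF sm])
    qed
  qed
  have "\<forall>x\<in>{0..1}. \<forall>y\<in>{0..1}. G x y = H (\<phi> x + \<phi> y - \<phi> x * \<phi> y)"
    using key by (simp add: SP_def)
  with phs bij pa show ?thesis by blast
qed

theorem theorem6p4:
  fixes a :: real and G :: "real \<Rightarrow> real \<Rightarrow> real"
  assumes "a \<ge> 0"
    and "\<forall>x\<in>{0..1}. \<forall>y\<in>{0..1}. G x y \<in> {0..1}"
  shows "((\<exists>(t :: real \<Rightarrow> ennreal) (s :: ennreal \<Rightarrow> real).
             continuous_on {0..1} t \<and> strict_mono_on {0..1} t \<and>
             continuous_on UNIV s \<and> mono s \<and> (\<forall>u. s u \<in> {0..1}) \<and>
             (\<forall>x\<in>{0..1}. \<forall>y\<in>{0..1}. G x y = s (t x + t y)) \<and>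
             grouping_function G \<and>
             ((\<forall>x\<in>{0..1}. t x = ennreal (a / 2) \<longleftrightarrow> x = 0) \<or>
              (\<forall>u. s u = 0 \<longleftrightarrow> u \<le> ennreal a)))
         \<longleftrightarrow>
         (grouping_function G \<and>
          (\<exists>F S. pseudo_automorphism F \<and> strict_t_conorm S \<and>
             (\<forall>x\<in>{0..1}. \<forall>y\<in>{0..1}. G x y = F (S x y)))))
       \<and>
       ((grouping_function G \<and>
          (\<exists>F S. pseudo_automorphism F \<and> strict_t_conorm S \<and>
             (\<forall>x\<in>{0..1}. \<forall>y\<in>{0..1}. G x y = F (S x y))))
         \<longleftrightarrow>
         (\<exists>\<phi> H. strict_mono_on {0..1} \<phi> \<and> bij_betw \<phi> {0..1} {0..1} \<and>
             pseudo_automorphism H \<and>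
             (\<forall>x\<in>{0..1}. \<forall>y\<in>{0..1}.
                G x y = H (\<phi> x + \<phi> y - \<phi> x * \<phi> y))))"
    apply (rule conjI; rule iffI)
  subgoal
    apply (elim exE conjE)
    subgoal premises p
      using one_three[OF p(1) p(2) p(3) p(4) p(5) p(6) p(7)]
      apply (elim exE conjE)
      apply (rule three_two)
         apply assumption+
      done
    done
  subgoal
    apply (elim exE conjE)
    subgoal premises p
      using two_three[OF p(2) p(3) p(4)]
      apply (elim exE conjE)
      apply (rule three_one[OF assms(1)])
         apply assumption+
      done
    done
  subgoal
    apply (elim exE conjE)
    subgoal premises p
      by (rule two_three[OF p(2) p(3) p(4)])
    done
  subgoal
    apply (elim exE conjE)
    subgoal premises p
      by (rule three_two[OF p(1) p(2) p(3) p(4)])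
    done
  done

end
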